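(* Suppose there are a non-negative function $j$ on $(0,\infty)$ and constants $a\ge0$, $c_1,c_2\ge1$ such that $c_1^{-1}a|y|^2\le\sum_{i,j=1}^da_{ij}y_iy_j\le c_1a|y|^2$ and $c_1^{-1}j(|y|/c_2)\le J(y)\le c_1j(c_2|y|)$ for all $y\in\mathbb R^d$ ($y\neq0$ in the second). Then there is $c>0$ such that $c^{-1}\Psi_1^*(r)\le\Psi^*(r)\le c\,\Psi_1^*(r)$ for all $r>0$; in particular, there is $c\ge1$ with $\Psi^*(r)\le c\Psi_1^*(r)$ for all $r>0$.
   Context: Let $d\ge1$ and let $X$ be a symmetric Lévy process on $\mathbb R^d$ with Lévy exponent $\Psi(\xi)=\sum_{i,j=1}^d a_{ij}\xi_i\xi_j+\int_{\mathbb R^d}(1-\cos(\xi\cdot y))J(y)\,dy$ (i.e. $\mathbb E_x[e^{i\xi\cdot(X_t-X_0)}]=e^{-t\Psi(\xi)}$), where $A=(a_{ij})$ is a constant symmetric nonnegative definite matrix and $J\ge0$ is symmetric on $\mathbb R^d\setminus\{0\}$ with $\int(1\wedge|z|^2)J(z)dz<\infty$; $\Psi$ is unbounded. $\Psi^*(r)=\sup_{|z|\le r}\Psi(z)$ and $\Psi_1^*(r)=\sup_{s\in(-r,r)}\Psi((0,\dots,0,s))$. *)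

theory Defs
  imports "HOL-Analysis.Analysis"
begin

definition levy_exponent ::
  "real^'d^'d \<Rightarrow> (real^'d \<Rightarrow> real) \<Rightarrow> real^'d \<Rightarrow> real" where
  "levy_exponent A J \<xi> =
     \<xi> \<bullet> (A *v \<xi>) + (\<integral>y. (1 - cos (\<xi> \<bullet> y)) * J y \<partial>lborel)"

definition Psi_star :: "(real^'d \<Rightarrow> real) \<Rightarrow> real \<Rightarrow> real" where
  "Psi_star \<Psi> r = Sup (\<Psi> ` cball 0 r)"

definition last_idx :: "'d::{finite,linorder}" where
  "last_idx = Max UNIV"

definition Psi1_star :: "(real^'d::{finite,linorder} \<Rightarrow> real) \<Rightarrow> real \<Rightarrow> real" where
  "Psi1_star \<Psi> r = Sup ((\<lambda>s. \<Psi> (\<chi> i. if i = last_idx then s else 0)) ` {-r<..<r})"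

end

theory Submission imports Defs begin

lemma one_minus_cos_le: "1 - cos (t::real) \<le> t^2/2"
proof -
  have c: "cos t = 1 - 2*(sin (t/2))^2" using cos_double_sin[of "t/2"] by simp
  have "\<bar>sin(t/2)\<bar> \<le> \<bar>t/2\<bar>" by (rule abs_sin_x_le_abs_x)
  then have "(sin (t/2))^2 \<le> (t/2)^2" by (rule abs_le_square_iff[THEN iffD1])
  then show ?thesis using c by (simp add: power_divide)
qed

lemma one_minus_cos_nonneg: "0 \<le> 1 - cos (t::real)"
  by simp

lemma one_minus_cos_le2: "1 - cos (t::real) \<le> 2"
  using cos_ge_minus_one[of t] by linarith

lemma cos_add_le: "1 - cos ((a::real)+b) \<le> 2*(1-cos a) + 2*(1-cos b)"
proof -
  have sa: "(sin a)^2 \<le> 2*(1-cos a)"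
  proof -
    have "(sin a)^2 = (1-cos a)*(1+cos a)" using sin_cos_squared_add[of a] by (simp add: algebra_simps power2_eq_square)
    also have "\<dots> \<le> (1-cos a)*2" by (rule mult_left_mono) (auto simp: cos_le_one)
    finally show ?thesis by simp
  qed
  have sb: "(sin b)^2 \<le> 2*(1-cos b)"
  proof -
    have "(sin b)^2 = (1-cos b)*(1+cos b)" using sin_cos_squared_add[of b] by (simp add: algebra_simps power2_eq_square)
    also have "\<dots> \<le> (1-cos b)*2" by (rule mult_left_mono) (auto simp: cos_le_one)
    finally show ?thesis by simp
  qed
  have am: "sin a * sin b \<le> ((sin a)^2 + (sin b)^2)/2"
    using sum_squares_ge_zero[of "sin a - sin b" 0] by (simp add: power2_eq_square algebra_simps)
  have uv: "0 \<le> (1 - cos a) * (1 - cos b)" by simp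
  have "1 - cos (a+b) = (1 - cos a) + (1 - cos b) - (1-cos a)*(1-cos b) + sin a * sin b"
    by (simp add: cos_add algebra_simps)
  moreover have "x1 \<le> 2*x2+2*x3" if "x1 = x2+x3-x4+x5" "x5 \<le> (x6+x7)/2" "x6 \<le> 2*x2" "x7 \<le> 2*x3" "0 \<le> x4" for x1 x2 x3 x4 x5 x6 x7::real
    using that by (simp add: field_simps)
  ultimately show ?thesis using am sa sb uv by blast
qed

lemma cos_double_le: "1 - cos (2*(t::real)) \<le> 4*(1-cos t)"
proof -
  have "cos (2*t) = 2*(cos t)^2 - 1" by (rule cos_double_cos)
  then have "1 - cos (2*t) = 2*(1-cos t)*(1+cos t)" by (simp add: algebra_simps power2_eq_square)
  also have "\<dots> \<le> 2*(1-cos t)*2" by (rule mult_left_mono) (auto simp: cos_le_one)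
  finally show ?thesis by simp
qed

lemma cos_sum_le:
  assumes "finite S"
  shows "1 - cos (\<Sum>k\<in>S. (f k::real)) \<le> 2^card S * (\<Sum>k\<in>S. (1 - cos (f k)))"
  using assms
proof (induction S rule: finite_induct)
  case empty then show ?case by simp
next
  case (insert x F)
  have s0: "0 \<le> (\<Sum>k\<in>F. (1 - cos (f k)))" by (intro sum_nonneg) simp
  have p: "(2::real) \<le> 2^card (insert x F)" using insert by simp
  have "1 - cos (\<Sum>k\<in>insert x F. f k) = 1 - cos (f x + (\<Sum>k\<in>F. f k))" using insert by simp
  also have "\<dots> \<le> 2*(1 - cos (f x)) + 2*(1 - cos (\<Sum>k\<in>F. f k))" by (rule cos_add_le)
  also have "\<dots> \<le> 2*(1 - cos (f x)) + 2*(2^card F * (\<Sum>k\<in>F. (1 - cos (f k))))" using insert by simp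
  also have "\<dots> \<le> 2^card (insert x F) * (1 - cos (f x)) + 2^card (insert x F) * (\<Sum>k\<in>F. (1 - cos (f k)))"
    using insert p s0 by (intro add_mono mult_right_mono) auto
  also have "\<dots> = 2^card (insert x F) * (\<Sum>k\<in>insert x F. (1 - cos (f k)))"
    using insert by (simp add: algebra_simps)
  finally show ?case .
qed


lemma scale_lborel:
  fixes f :: "'a::euclidean_space \<Rightarrow> real"
  assumes c: "c \<noteq> 0" and f[measurable]: "f \<in> borel_measurable borel"
  shows "integrable lborel (\<lambda>x. f (c *\<^sub>R x)) \<longleftrightarrow> integrable lborel f"
    and "integral\<^sup>L lborel f = \<bar>c\<bar>^DIM('a) * integral\<^sup>L lborel (\<lambda>x. f (c *\<^sub>R x))"
proof -
  define D where "D = distr lborel borel (\<lambda>x::'a. 0 + c *\<^sub>R x)"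
  have L: "lborel = density D (\<lambda>_. ennreal (\<bar>c\<bar>^DIM('a)))"
    unfolding D_def by (rule lborel_affine[OF c])
  have m: "(\<lambda>x::'a. 0 + c *\<^sub>R x) \<in> measurable lborel borel" by simp
  have "integrable lborel f \<longleftrightarrow> integrable (density D (\<lambda>_. ennreal (\<bar>c\<bar>^DIM('a)))) f"
    by (rule arg_cong[where f="\<lambda>M. integrable M f"]) (rule L)
  also have "\<dots> \<longleftrightarrow> integrable D (\<lambda>x. \<bar>c\<bar>^DIM('a) *\<^sub>R f x)"
    by (rule integrable_density) (auto simp: D_def)
  also have "\<dots> \<longleftrightarrow> integrable lborel (\<lambda>x. \<bar>c\<bar>^DIM('a) *\<^sub>R f (0 + c *\<^sub>R x))"
    unfolding D_def by (rule integrable_distr_eq[OF m]) simp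
  also have "\<dots> \<longleftrightarrow> integrable lborel (\<lambda>x. f (c *\<^sub>R x))"
    using c by simp
  finally show "integrable lborel (\<lambda>x. f (c *\<^sub>R x)) \<longleftrightarrow> integrable lborel f" by simp
  have "integral\<^sup>L lborel f = integral\<^sup>L (density D (\<lambda>_. ennreal (\<bar>c\<bar>^DIM('a)))) f"
    by (rule arg_cong[where f="\<lambda>M. integral\<^sup>L M f"]) (rule L)
  also have "\<dots> = integral\<^sup>L D (\<lambda>x. \<bar>c\<bar>^DIM('a) *\<^sub>R f x)"
    by (rule integral_density) (auto simp: D_def)
  also have "\<dots> = integral\<^sup>L lborel (\<lambda>x. \<bar>c\<bar>^DIM('a) *\<^sub>R f (0 + c *\<^sub>R x))"
    unfolding D_def by (rule integral_distr[OF m]) simp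
  also have "\<dots> = \<bar>c\<bar>^DIM('a) * integral\<^sup>L lborel (\<lambda>x. f (c *\<^sub>R x))"
    by simp
  finally show "integral\<^sup>L lborel f = \<bar>c\<bar>^DIM('a) * integral\<^sup>L lborel (\<lambda>x. f (c *\<^sub>R x))" .
qed

definition pvec :: "('n \<Rightarrow> 'n) \<Rightarrow> real^'n \<Rightarrow> real^'n" where
  "pvec \<sigma> y = (\<chi> i. y $ \<sigma> i)"

lemma linear_pvec: "linear (pvec \<sigma>)"
  by (auto simp: linear_iff pvec_def vec_eq_iff)

lemma pvec_meas[measurable]: "pvec \<sigma> \<in> borel_measurable borel"
  by (intro borel_measurable_continuous_onI linear_continuous_on linear_pvec[unfolded linear_conv_bounded_linear])

lemma prod_Basis_vec: "(\<Prod>b\<in>(Basis::(real^'n) set). f b) = (\<Prod>i\<in>UNIV. f (axis i 1))"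
proof -
  have B: "(Basis::(real^'n) set) = range (\<lambda>i. axis i 1)" by (auto simp: Basis_vec_def)
  have "inj (\<lambda>i::'n. axis i (1::real))" by (auto simp: inj_def axis_eq_axis)
  then show ?thesis unfolding B by (simp add: prod.reindex)
qed

lemma norm_pvec:
  assumes inv: "\<And>i. \<sigma> (\<sigma> i) = i"
  shows "norm (pvec \<sigma> y) = norm y"
proof -
  have bij: "bij \<sigma>" using inv by (metis bij_betw_def inj_def surj_def)
  have "pvec \<sigma> y \<bullet> pvec \<sigma> y = y \<bullet> y"
    unfolding inner_vec_def pvec_def using sum.reindex_bij_betw[OF bij, of "\<lambda>i. y$i \<bullet> y$i"] by simp
  then show ?thesis by (simp add: norm_eq_sqrt_inner)
qed

lemma lborel_perm:
  assumes inv: "\<And>i. \<sigma> (\<sigma> i) = i"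
  shows "distr lborel borel (pvec \<sigma>) = (lborel :: (real^'n) measure)"
proof -
  have bij: "bij \<sigma>" using inv by (metis bij_betw_def inj_def surj_def)
  show ?thesis
  proof (rule lborel_eqI[symmetric])
    fix l u :: "real^'n" assume le: "\<And>b. b\<in>Basis \<Longrightarrow> l\<bullet>b \<le> u\<bullet>b"
    have le': "l $ i \<le> u $ i" for i using le[of "axis i 1"] by (simp add: inner_axis)
    have pre: "pvec \<sigma> -` box l u = box (pvec \<sigma> l) (pvec \<sigma> u)"
      by (auto simp: mem_box_cart pvec_def) (metis inv)+
    have "emeasure (distr lborel borel (pvec \<sigma>)) (box l u) = emeasure lborel (box (pvec \<sigma> l) (pvec \<sigma> u))"
      by (simp add: emeasure_distr pre)
    also have "\<dots> = (\<Prod>i\<in>UNIV. (u $ \<sigma> i - l $ \<sigma> i))"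
    proof -
      have cond: "\<forall>b\<in>Basis. pvec \<sigma> l \<bullet> b \<le> pvec \<sigma> u \<bullet> b"
        by (auto simp: Basis_vec_def inner_axis pvec_def le')
      show ?thesis using cond by (simp add: emeasure_lborel_box_eq prod_Basis_vec inner_axis pvec_def)
    qed
    also have "(\<Prod>i\<in>UNIV. (u $ \<sigma> i - l $ \<sigma> i)) = (\<Prod>i\<in>UNIV. (u $ i - l $ i))"
      using prod.reindex_bij_betw[OF bij, of "\<lambda>i. u $ i - l $ i"] by simp
    also have "\<dots> = (\<Prod>b\<in>Basis. (u - l) \<bullet> b)"
      by (simp add: prod_Basis_vec inner_axis)
    finally show "emeasure (distr lborel borel (pvec \<sigma>)) (box l u) = (\<Prod>b\<in>Basis. (u - l) \<bullet> b)" .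
  qed simp
qed

lemma perm_lborel:
  fixes f :: "real^'n \<Rightarrow> real"
  assumes inv: "\<And>i. \<sigma> (\<sigma> i) = i" and f[measurable]: "f \<in> borel_measurable borel"
  shows "integrable lborel (\<lambda>x. f (pvec \<sigma> x)) \<longleftrightarrow> integrable lborel f"
    and "integral\<^sup>L lborel (\<lambda>x. f (pvec \<sigma> x)) = integral\<^sup>L lborel f"
proof -
  have m: "pvec \<sigma> \<in> measurable lborel borel" by simp
  show "integrable lborel (\<lambda>x. f (pvec \<sigma> x)) \<longleftrightarrow> integrable lborel f"
    using integrable_distr_eq[OF m f] lborel_perm[OF inv] by simp
  show "integral\<^sup>L lborel (\<lambda>x. f (pvec \<sigma> x)) = integral\<^sup>L lborel f"
    using integral_distr[OF m f] lborel_perm[OF inv] by simp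
qed


lemma cos_inner_bound:
  fixes \<xi> y :: "'a::real_inner"
  shows "1 - cos (\<xi> \<bullet> y) \<le> max 2 (norm \<xi>^2) * min 1 (norm y^2)"
proof (cases "norm y \<ge> 1")
  case True
  then have "min 1 (norm y^2) = 1" by (simp add: one_le_power)
  moreover have "1 - cos (\<xi> \<bullet> y) \<le> max 2 (norm \<xi>^2)"
    using one_minus_cos_le2[of "\<xi> \<bullet> y"] by (simp add: le_max_iff_disj)
  ultimately show ?thesis by simp
next
  case False
  then have m: "min 1 (norm y^2) = norm y^2"
    by (simp add: power_le_one)
  have "\<bar>\<xi> \<bullet> y\<bar> \<le> norm \<xi> * norm y" by (rule Cauchy_Schwarz_ineq2)
  then have "(\<xi> \<bullet> y)^2 \<le> (norm \<xi> * norm y)^2"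
    by (metis abs_le_square_iff abs_mult abs_norm_cancel)
  then have "1 - cos (\<xi> \<bullet> y) \<le> norm \<xi>^2 * norm y^2 / 2"
    using one_minus_cos_le[of "\<xi> \<bullet> y"] by (simp add: power_mult_distrib)
  also have "\<dots> \<le> norm \<xi>^2 * norm y^2" by simp
  also have "\<dots> \<le> max 2 (norm \<xi>^2) * norm y^2"
    by (rule mult_right_mono) auto
  finally show ?thesis using m by simp
qed


lemma aux_four: "0 \<le> (w::real) \<Longrightarrow> 1 \<le> u \<Longrightarrow> 1 \<le> 4 * (u + w)"
proof -
  assume "0 \<le> w" "1 \<le> u"
  moreover have "4 * (u + w) = 4 * u + 4 * w" by (simp add: algebra_simps)
  ultimately show ?thesis by linarith
qed

theorem lemma2p9:
  fixes A :: "((real, 'd::{finite,linorder}) vec, 'd) vec"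
    and J :: "(real, 'd) vec \<Rightarrow> real"
    and j :: "real \<Rightarrow> real"
    and a c1 c2 :: real
  assumes A_sym: "transpose A = A"
    and A_nonneg: "\<And>\<xi>. \<xi> \<bullet> (A *v \<xi>) \<ge> 0"
    and J_meas: "J \<in> borel_measurable lborel"
    and J_nonneg: "\<And>y. y \<noteq> 0 \<Longrightarrow> J y \<ge> 0"
    and J_symm: "\<And>y. y \<noteq> 0 \<Longrightarrow> J (- y) = J y"
    and J_int: "integrable lborel (\<lambda>z. min 1 (norm z ^ 2) * J z)"
    and Psi_unbounded: "\<not> bdd_above (range (levy_exponent A J))"
    and j_nonneg: "\<And>t. t > 0 \<Longrightarrow> j t \<ge> 0"
    and a_nonneg: "a \<ge> 0" and c1: "c1 \<ge> 1" and c2: "c2 \<ge> 1"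
    and A_comp: "\<And>y. a * norm y ^ 2 / c1 \<le> y \<bullet> (A *v y) \<and> y \<bullet> (A *v y) \<le> c1 * a * norm y ^ 2"
    and J_comp: "\<And>y. y \<noteq> 0 \<Longrightarrow> j (norm y / c2) / c1 \<le> J y \<and> J y \<le> c1 * j (c2 * norm y)"
  shows "\<exists>c>0. \<forall>r>0.
           Psi1_star (levy_exponent A J) r / c \<le> Psi_star (levy_exponent A J) r \<and>
           Psi_star (levy_exponent A J) r \<le> c * Psi1_star (levy_exponent A J) r"
proof -
  have Jm[measurable]: "J \<in> borel_measurable borel" using J_meas by simp
  define I where "I = (\<lambda>\<xi>::(real, 'd) vec. \<integral>y. (1 - cos (\<xi> \<bullet> y)) * J y \<partial>lborel)"
  define Q where "Q = (\<lambda>\<xi>::(real, 'd) vec. \<xi> \<bullet> (A *v \<xi>))"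
  define \<Psi> where "\<Psi> = levy_exponent A J"
  define K where "K = (\<integral>z. min 1 (norm z ^ 2) * J z \<partial>lborel)"
  have Psi_eq: "\<Psi> \<xi> = Q \<xi> + I \<xi>" for \<xi>
    by (simp add: \<Psi>_def Q_def I_def levy_exponent_def)
  have pt_nonneg: "0 \<le> (1 - cos (\<xi> \<bullet> y)) * J y" for \<xi> y :: "(real, 'd) vec"
    by (cases "y = 0") (auto intro!: mult_nonneg_nonneg J_nonneg)
  have pt_bound: "(1 - cos (\<xi> \<bullet> y)) * J y \<le> max 2 (norm \<xi>^2) * (min 1 (norm y ^ 2) * J y)" for \<xi> y :: "(real, 'd) vec"
  proof (cases "y = 0")
    case True then show ?thesis by simp
  next
    case False
    then have "(1 - cos (\<xi> \<bullet> y)) * J y \<le> (max 2 (norm \<xi>^2) * min 1 (norm y ^ 2)) * J y"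
      by (intro mult_right_mono cos_inner_bound J_nonneg)
    then show ?thesis by (simp add: mult.assoc)
  qed
  have Kint_nonneg: "0 \<le> min 1 (norm y ^ 2) * J y" for y :: "(real, 'd) vec"
    by (cases "y = 0") (auto intro!: mult_nonneg_nonneg J_nonneg)
  have K_nonneg: "0 \<le> K" unfolding K_def by (intro Bochner_Integration.integral_nonneg Kint_nonneg)
  have int: "integrable lborel (\<lambda>y. (1 - cos (\<xi> \<bullet> y)) * J y)" for \<xi> :: "(real, 'd) vec"
  proof (rule Bochner_Integration.integrable_bound)
    show "integrable lborel (\<lambda>y. max 2 (norm \<xi>^2) * (min 1 (norm y ^ 2) * J y))"
      using J_int by simp
    show "(\<lambda>y. (1 - cos (\<xi> \<bullet> y)) * J y) \<in> borel_measurable lborel" by measurable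
    show "AE y in lborel. norm ((1 - cos (\<xi> \<bullet> y)) * J y) \<le> norm (max 2 (norm \<xi>^2) * (min 1 (norm y ^ 2) * J y))"
      using pt_nonneg pt_bound Kint_nonneg
      by (intro AE_I2) (smt (verit) real_norm_def)
  qed
  have I_nonneg: "0 \<le> I \<xi>" for \<xi> unfolding I_def by (intro Bochner_Integration.integral_nonneg pt_nonneg)
  have Psi_nonneg: "0 \<le> \<Psi> \<xi>" for \<xi> using I_nonneg A_nonneg by (simp add: Psi_eq Q_def add_nonneg_nonneg)
  have I_le_Psi: "I \<xi> \<le> \<Psi> \<xi>" for \<xi> using A_nonneg by (simp add: Psi_eq Q_def)
  have Psi_bound: "\<Psi> \<xi> \<le> c1 * a * norm \<xi>^2 + max 2 (norm \<xi>^2) * K" for \<xi>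
  proof -
    have "I \<xi> \<le> (\<integral>y. max 2 (norm \<xi>^2) * (min 1 (norm y ^ 2) * J y) \<partial>lborel)"
      unfolding I_def by (intro Bochner_Integration.integral_mono int pt_bound) (use J_int in simp)
    also have "\<dots> = max 2 (norm \<xi>^2) * K" unfolding K_def by simp
    finally show ?thesis using A_comp[of \<xi>] by (simp add: Psi_eq Q_def)
  qed
  have Q_scale: "Q (c *\<^sub>R \<xi>) = c^2 * Q \<xi>" for c \<xi>
    by (simp add: Q_def matrix_vector_mult_scaleR power2_eq_square)
  have Psi_double: "\<Psi> (2 *\<^sub>R \<xi>) \<le> 4 * \<Psi> \<xi>" for \<xi>
  proof -
    have "I (2 *\<^sub>R \<xi>) \<le> (\<integral>y. 4 * ((1 - cos (\<xi> \<bullet> y)) * J y) \<partial>lborel)"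
      unfolding I_def
    proof (intro Bochner_Integration.integral_mono int)
      show "integrable lborel (\<lambda>y. 4 * ((1 - cos (\<xi> \<bullet> y)) * J y))" using int[of \<xi>] by simp
      fix y :: "(real, 'd) vec"
      show "(1 - cos (2 *\<^sub>R \<xi> \<bullet> y)) * J y \<le> 4 * ((1 - cos (\<xi> \<bullet> y)) * J y)"
      proof (cases "y = 0")
        case True then show ?thesis by simp
      next
        case False
        have "(1 - cos (2 *\<^sub>R \<xi> \<bullet> y)) * J y \<le> (4 * (1 - cos (\<xi> \<bullet> y))) * J y"
          using False cos_double_le[of "\<xi> \<bullet> y"] by (intro mult_right_mono J_nonneg) simp_all
        then show ?thesis by (simp add: algebra_simps)
      qed
    qed
    also have "\<dots> = 4 * I \<xi>" unfolding I_def by simp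
    finally show ?thesis using Q_scale[of 2 \<xi>] A_nonneg[of \<xi>] by (simp add: Psi_eq Q_def)
  qed
  have I_sum: "I x \<le> 2^CARD('d) * (\<Sum>k\<in>UNIV. I (axis k (x$k)))" for x :: "(real, 'd) vec"
  proof -
    have ax: "axis k (x$k) \<bullet> y = x$k * y$k" for k and y :: "(real, 'd) vec"
      by (simp add: inner_axis')
    have xy: "x \<bullet> y = (\<Sum>k\<in>UNIV. x$k * y$k)" for y :: "(real, 'd) vec"
      by (simp add: inner_vec_def)
    have "I x \<le> (\<integral>y. 2^CARD('d) * (\<Sum>k\<in>UNIV. (1 - cos (axis k (x$k) \<bullet> y)) * J y) \<partial>lborel)"
      unfolding I_def
    proof (intro Bochner_Integration.integral_mono int)
      show "integrable lborel (\<lambda>y. 2^CARD('d) * (\<Sum>k\<in>UNIV. (1 - cos (axis k (x$k) \<bullet> y)) * J y))"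
        using int by (intro integrable_mult_right integrable_sum) auto
      fix y :: "(real, 'd) vec"
      show "(1 - cos (x \<bullet> y)) * J y \<le> 2^CARD('d) * (\<Sum>k\<in>UNIV. (1 - cos (axis k (x$k) \<bullet> y)) * J y)"
      proof (cases "y = 0")
        case True then show ?thesis by simp
      next
        case False
        have "(1 - cos (x \<bullet> y)) * J y \<le> (2^CARD('d) * (\<Sum>k\<in>UNIV. (1 - cos (x$k * y$k)))) * J y"
          using False cos_sum_le[of UNIV "\<lambda>k. x$k * y$k"] unfolding xy
          by (intro mult_right_mono J_nonneg) simp_all
        then show ?thesis by (simp add: ax sum_distrib_right mult.assoc)
      qed
    qed
    also have "\<dots> = 2^CARD('d) * (\<Sum>k\<in>UNIV. I (axis k (x$k)))"
      unfolding I_def using int by (simp add: integral_sum)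
    finally show ?thesis .
  qed
  have c2sq: "c2^2 \<noteq> 0" using c2 by simp
  have I_coord: "I (axis k s) \<le> c1^2 * I (axis last_idx (s / c2^2))" for k s
  proof -
    define \<sigma> where "\<sigma> = (\<lambda>i::'d. if i = k then last_idx else if i = last_idx then k else i)"
    have inv: "\<sigma> (\<sigma> i) = i" for i unfolding \<sigma>_def by auto
    have \<sigma>l: "\<sigma> last_idx = k" unfolding \<sigma>_def by auto
    define t where "t = s / c2^2"
    define g where "g = (\<lambda>v::(real,'d) vec. (1 - cos (axis last_idx t \<bullet> v)) * J v)"
    have gm[measurable]: "g \<in> borel_measurable borel" unfolding g_def by measurable
    define g2 where "g2 = (\<lambda>z::(real,'d) vec. g (c2^2 *\<^sub>R z))"
    have g2m[measurable]: "g2 \<in> borel_measurable borel" unfolding g2_def by measurable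
    have gint: "integrable lborel g" unfolding g_def by (rule int)
    have g2int: "integrable lborel g2" unfolding g2_def using scale_lborel(1)[OF c2sq gm] gint by simp
    have hint: "integrable lborel (\<lambda>y. g2 (pvec \<sigma> y))" using perm_lborel(1)[OF inv g2m] g2int by simp
    have hI: "integral\<^sup>L lborel (\<lambda>y. g2 (pvec \<sigma> y)) = integral\<^sup>L lborel g2" by (rule perm_lborel(2)[OF inv g2m])
    have gI: "integral\<^sup>L lborel g = \<bar>c2^2\<bar>^DIM((real,'d) vec) * integral\<^sup>L lborel g2"
      using scale_lborel(2)[OF c2sq gm] unfolding g2_def by simp
    have g2_nonneg: "0 \<le> integral\<^sup>L lborel g2" unfolding g2_def g_def
      by (intro Bochner_Integration.integral_nonneg pt_nonneg)
    have p0: "pvec \<sigma> 0 = 0" by (simp add: pvec_def vec_eq_iff)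
    have pw: "(1 - cos (axis k s \<bullet> y)) * J y \<le> c1^2 * g2 (pvec \<sigma> y)" for y
    proof (cases "y = 0")
      case True then show ?thesis by (simp add: g2_def g_def p0)
    next
      case False
      define w where "w = c2^2 *\<^sub>R pvec \<sigma> y"
      have nw: "norm w = c2^2 * norm y" using norm_pvec[OF inv] c2 by (simp add: w_def)
      have w0: "w \<noteq> 0" proof -
        have "norm w \<noteq> 0" using False nw c2sq by simp
        then show ?thesis by simp
      qed
      have "j (norm w / c2) / c1 \<le> J w" using J_comp[OF w0] by simp
      moreover have "norm w / c2 = c2 * norm y" using nw c2 by (simp add: power2_eq_square)
      ultimately have "j (c2 * norm y) \<le> c1 * J w" using c1 by (simp add: divide_le_eq mult.commute)
      then have "c1 * j (c2 * norm y) \<le> c1 * (c1 * J w)" using c1 by simp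
      then have Jy: "J y \<le> c1^2 * J w" using J_comp[OF False] by (simp add: power2_eq_square)
      have arg: "axis last_idx t \<bullet> w = axis k s \<bullet> y"
        using c2sq by (simp add: w_def inner_axis' pvec_def \<sigma>l t_def)
      have "(1 - cos (axis k s \<bullet> y)) * J y \<le> (1 - cos (axis k s \<bullet> y)) * (c1^2 * J w)"
        by (rule mult_left_mono[OF Jy]) simp
      also have "\<dots> = c1^2 * ((1 - cos (axis last_idx t \<bullet> w)) * J w)"
        by (simp add: arg)
      also have "\<dots> = c1^2 * g2 (pvec \<sigma> y)"
        by (simp only: g2_def g_def w_def)
      finally show ?thesis .
    qed
    have "I (axis k s) \<le> (\<integral>y. c1^2 * g2 (pvec \<sigma> y) \<partial>lborel)"
      unfolding I_def by (intro Bochner_Integration.integral_mono int pw) (use hint in simp)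
    also have "\<dots> = c1^2 * integral\<^sup>L lborel g2" using hI by simp
    also have "\<dots> \<le> c1^2 * integral\<^sup>L lborel g"
    proof (rule mult_left_mono)
      have X1: "1 \<le> \<bar>c2^2\<bar>^DIM((real,'d) vec)" using c2 by (simp add: one_le_power)
      then show "integral\<^sup>L lborel g2 \<le> integral\<^sup>L lborel g"
        unfolding gI using mult_right_mono[OF X1 g2_nonneg] by simp
    qed simp
    also have "\<dots> = c1^2 * I (axis last_idx (s / c2^2))" by (simp add: g_def I_def t_def)
    finally show ?thesis .
  qed
  define n where "n = CARD('d)"
  define C where "C = 4 * (c1^2 + 2^n * real n * c1^2)"
  have c1sq: "1 \<le> c1^2" using c1 by (simp add: one_le_power)
  have C1: "1 \<le> C"
  proof -
    have "0 \<le> 2^n * real n * c1^2" by simp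
    then show ?thesis unfolding C_def using c1sq by (rule aux_four)
  qed
  have ax_eq: "(\<chi> i. if i = last_idx then s else 0) = axis last_idx s" for s :: real
    by (simp add: axis_def)
  have norm_ax: "norm (axis (i::'d) s) = \<bar>s\<bar>" for i and s :: real
  proof -
    have "axis i s = s *\<^sub>R axis i (1::real)" by (simp add: vec_eq_iff axis_def)
    then show ?thesis by simp
  qed
  have Psi_cball: "\<Psi> \<xi> \<le> c1*a*r^2 + max 2 (r^2) * K" if "norm \<xi> \<le> r" for \<xi> r
  proof -
    have sq: "norm \<xi>^2 \<le> r^2" using that by (intro power_mono) auto
    have "c1*a*norm \<xi>^2 \<le> c1*a*r^2" using sq c1 a_nonneg by (intro mult_left_mono) auto
    moreover have "max 2 (norm \<xi>^2) * K \<le> max 2 (r^2) * K"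
      using sq K_nonneg by (intro mult_right_mono) auto
    ultimately show ?thesis using Psi_bound[of \<xi>] by linarith
  qed
  show ?thesis
  proof (intro exI[of _ C] conjI allI impI)
    show "C > 0" using C1 by simp
    fix r :: real assume r: "r > 0"
    define S1 where "S1 = (\<lambda>s. \<Psi> (axis last_idx s)) ` {-r<..<r}"
    define S where "S = \<Psi> ` cball 0 r"
    have P1: "Psi1_star (levy_exponent A J) r = Sup S1" by (simp add: Psi1_star_def S1_def \<Psi>_def ax_eq)
    have P: "Psi_star (levy_exponent A J) r = Sup S" by (simp add: Psi_star_def S_def \<Psi>_def)
    have bS: "bdd_above S" unfolding S_def
      by (rule bdd_aboveI2[where M="c1*a*r^2 + max 2 (r^2) * K"]) (simp add: Psi_cball mem_cball_0)
    have sub: "S1 \<subseteq> S" unfolding S1_def S_def by (auto simp: norm_ax)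
    have bS1: "bdd_above S1" using bdd_above_mono[OF bS sub] .
    have ne1: "S1 \<noteq> {}" unfolding S1_def using r by auto
    have neS: "S \<noteq> {}" unfolding S_def using r by auto
    have P1_ge: "\<Psi> (axis last_idx s) \<le> Sup S1" if "\<bar>s\<bar> < r" for s
    proof (rule cSup_upper[OF _ bS1])
      show "\<Psi> (axis last_idx s) \<in> S1" unfolding S1_def
        by (rule imageI) (use that in \<open>auto simp: abs_less_iff\<close>)
    qed
    have P1_nonneg: "0 \<le> Sup S1" using P1_ge[of 0] Psi_nonneg[of "axis last_idx 0"] r by simp
    have S1S: "Sup S1 \<le> Sup S" by (rule cSup_subset_mono[OF ne1 bS sub])
    show "Psi1_star (levy_exponent A J) r / C \<le> Psi_star (levy_exponent A J) r"
    proof -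
      have "Sup S1 * 1 \<le> Sup S1 * C" by (rule mult_left_mono[OF C1 P1_nonneg])
      then have "Sup S1 / C \<le> Sup S1" using C1 by (simp add: divide_le_eq)
      then show ?thesis unfolding P1 P using S1S by linarith
    qed
    show "Psi_star (levy_exponent A J) r \<le> C * Psi1_star (levy_exponent A J) r"
      unfolding P P1
    proof (rule cSup_least[OF neS])
      fix z assume "z \<in> S"
      then obtain \<xi> where \<xi>: "norm \<xi> \<le> r" and z: "z = \<Psi> \<xi>" unfolding S_def by (auto simp: dist_norm)
      define x where "x = (1/2) *\<^sub>R \<xi>"
      have \<xi>x: "\<xi> = 2 *\<^sub>R x" by (simp add: x_def)
      have nx: "norm x < r" using \<xi> r by (simp add: x_def)
      have Qx: "Q x \<le> c1^2 * Sup S1"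
      proof -
        have nax: "norm (axis (last_idx::'d) (norm x)) = norm x" using norm_ax[of last_idx "norm x"] by simp
        have "Q x \<le> c1 * a * norm x^2" using A_comp[of x] by (simp add: Q_def)
        also have "\<dots> = c1^2 * (a * norm (axis (last_idx::'d) (norm x)) ^ 2 / c1)"
          using c1 unfolding nax by (simp add: power2_eq_square)
        also have "\<dots> \<le> c1^2 * Q (axis last_idx (norm x))"
          using A_comp[of "axis last_idx (norm x)"] c1sq by (intro mult_left_mono) (auto simp: Q_def)
        also have "\<dots> \<le> c1^2 * \<Psi> (axis last_idx (norm x))"
          using I_nonneg by (intro mult_left_mono) (auto simp: Psi_eq)
        also have "\<dots> \<le> c1^2 * Sup S1"
          using nx by (intro mult_left_mono P1_ge) auto
        finally show ?thesis .
      qed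
      have Ik: "I (axis k (x$k)) \<le> c1^2 * Sup S1" for k
      proof -
        have c2s1: "1 \<le> c2^2" using c2 by (simp add: one_le_power)
        have "\<bar>x$k\<bar> * 1 \<le> \<bar>x$k\<bar> * c2^2" by (rule mult_left_mono[OF c2s1]) simp
        then have "\<bar>x$k / c2^2\<bar> \<le> \<bar>x$k\<bar>" using c2s1 by (simp add: abs_div divide_le_eq)
        also have "\<dots> \<le> norm x" by (rule component_le_norm_cart)
        finally have lt: "\<bar>x$k / c2^2\<bar> < r" using nx by linarith
        have "I (axis k (x$k)) \<le> c1^2 * I (axis last_idx (x$k / c2^2))" by (rule I_coord)
        also have "\<dots> \<le> c1^2 * Sup S1"
          using I_le_Psi P1_ge[OF lt] by (intro mult_left_mono) (auto intro: order_trans)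
        finally show ?thesis .
      qed
      have Ix: "I x \<le> 2^n * real n * c1^2 * Sup S1"
      proof -
        have "I x \<le> 2^n * (\<Sum>k\<in>UNIV. I (axis k (x$k)))" using I_sum[of x] by (simp add: n_def)
        also have "\<dots> \<le> 2^n * (\<Sum>k\<in>(UNIV::'d set). c1^2 * Sup S1)"
          using Ik by (intro mult_left_mono sum_mono) auto
        also have "\<dots> = 2^n * real n * c1^2 * Sup S1" by (simp add: n_def)
        finally show ?thesis .
      qed
      have "z \<le> 4 * \<Psi> x" using Psi_double[of x] by (simp add: z \<xi>x)
      also have "\<dots> = 4 * (Q x + I x)" by (simp add: Psi_eq)
      also have "\<dots> \<le> 4 * (c1^2 * Sup S1 + 2^n * real n * c1^2 * Sup S1)"
        using Qx Ix by simp
      also have "\<dots> = C * Sup S1" by (simp add: C_def algebra_simps)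
      finally show "z \<le> C * Sup S1" .
    qed
  qed
qed

end
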